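(* Let $\beta_1,\dots,\beta_{14}$ be a basis of $iD$ with $\operatorname{Tr}(\beta_a\beta_b)=\frac12\delta_{ab}$, where $D\subset\mathfrak{so}(7)$ is the derivation algebra of the octonions acting on the imaginary octonions $\operatorname{Im}(\mathbb O)\cong\mathbb R^7$. If $v\in\mathbb R^{14}$ is such that $\frac17(\mathbf 1_7+\sum_iv_i\beta_i)$ is a density matrix, then $|v|^2\le 8(10-\sqrt{65})$; in particular $|v|\le 3.93$.
   Context: A density matrix is a positive semidefinite Hermitian matrix of trace 1. The $\beta_i$ are Hermitian $7\times7$ matrices spanning $i$ times the 7-dimensional fundamental representation of $\mathfrak g_2$. *)

theory Defs
  imports Complex_Main
begin

text \<open>Octonions as R^8 with basis e0 (= 1), e1..e7, represented as nat => real
  (only components 0..7 matter). Multiplication via the standard Fano-plane table: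
  e_i e_j = - delta_ij e0 + eps_ijk e_k for imaginary units, with oriented triples
  (1,2,3),(1,4,5),(1,7,6),(2,4,6),(2,5,7),(3,4,7),(3,6,5).\<close>

definition fano_triples :: "(nat \<times> nat \<times> nat) list" where
  "fano_triples = [(1,2,3),(1,4,5),(1,7,6),(2,4,6),(2,5,7),(3,4,7),(3,6,5)]"

definition oct_eps :: "nat \<Rightarrow> nat \<Rightarrow> nat \<Rightarrow> real" where
  "oct_eps i j k =
     (if (i,j,k) \<in> set fano_triples \<or> (j,k,i) \<in> set fano_triples \<or> (k,i,j) \<in> set fano_triples
      then 1
      else if (j,i,k) \<in> set fano_triples \<or> (i,k,j) \<in> set fano_triples \<or> (k,j,i) \<in> set fano_triples
      then -1 else 0)"

definition oct_c :: "nat \<Rightarrow> nat \<Rightarrow> nat \<Rightarrow> real" where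
  "oct_c i j k =
     (if i = 0 then (if j = k then 1 else 0)
      else if j = 0 then (if i = k then 1 else 0)
      else if i = j then (if k = 0 then -1 else 0)
      else oct_eps i j k)"

definition oct_mult :: "(nat \<Rightarrow> real) \<Rightarrow> (nat \<Rightarrow> real) \<Rightarrow> (nat \<Rightarrow> real)" where
  "oct_mult x y = (\<lambda>k. \<Sum>i<8. \<Sum>j<8. x i * y j * oct_c i j k)"

definition oct_apply :: "(nat \<Rightarrow> nat \<Rightarrow> real) \<Rightarrow> (nat \<Rightarrow> real) \<Rightarrow> (nat \<Rightarrow> real)" where
  "oct_apply M x = (\<lambda>i. \<Sum>j<8. M i j * x j)"

definition is_oct_derivation :: "(nat \<Rightarrow> nat \<Rightarrow> real) \<Rightarrow> bool" where
  "is_oct_derivation M \<longleftrightarrow>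
     (\<forall>x y. \<forall>k<8. oct_apply M (oct_mult x y) k
                  = oct_mult (oct_apply M x) y k + oct_mult x (oct_apply M y) k)"

text \<open>Extend a 7x7 matrix on Im(O) = span(e1..e7) (indices 0..6 correspond to e1..e7)
  to an 8x8 matrix on O acting as 0 on e0.\<close>
definition ext_im :: "(nat \<Rightarrow> nat \<Rightarrow> real) \<Rightarrow> (nat \<Rightarrow> nat \<Rightarrow> real)" where
  "ext_im A = (\<lambda>i j. if 1 \<le> i \<and> i < 8 \<and> 1 \<le> j \<and> j < 8 then A (i - 1) (j - 1) else 0)"

definition derD :: "(nat \<Rightarrow> nat \<Rightarrow> real) set" where
  "derD = {A. is_oct_derivation (ext_im A)}"

definition in_iD :: "(nat \<Rightarrow> nat \<Rightarrow> complex) \<Rightarrow> bool" where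
  "in_iD B \<longleftrightarrow> (\<exists>A\<in>derD. \<forall>i<7. \<forall>j<7. B i j = \<i> * complex_of_real (A i j))"

definition density_matrix7 :: "(nat \<Rightarrow> nat \<Rightarrow> complex) \<Rightarrow> bool" where
  "density_matrix7 \<rho> \<longleftrightarrow>
     (\<forall>i<7. \<forall>j<7. \<rho> j i = cnj (\<rho> i j)) \<and>
     (\<forall>x::nat \<Rightarrow> complex. 0 \<le> Re (\<Sum>i<7. \<Sum>j<7. cnj (x i) * \<rho> i j * x j)) \<and>
     (\<Sum>i<7. \<rho> i i) = 1"

end

theory Submission
  imports Defs
begin

lemma swap3: "(\<Sum>j\<in>J. \<Sum>k\<in>K. \<Sum>a\<in>A. g j k a) = (\<Sum>a\<in>A. \<Sum>j\<in>J. \<Sum>k\<in>K. g j k a)"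
proof -
  have "(\<Sum>j\<in>J. \<Sum>k\<in>K. \<Sum>a\<in>A. g j k a) = (\<Sum>j\<in>J. \<Sum>a\<in>A. \<Sum>k\<in>K. g j k a)"
    by (rule sum.cong[OF refl], rule sum.swap)
  also have "\<dots> = (\<Sum>a\<in>A. \<Sum>j\<in>J. \<Sum>k\<in>K. g j k a)" by (rule sum.swap)
  finally show ?thesis .
qed

theorem mainTheorem18:
  fixes \<beta> :: "nat \<Rightarrow> nat \<Rightarrow> nat \<Rightarrow> complex" and v :: "nat \<Rightarrow> real"
  assumes mem: "\<forall>a<14. in_iD (\<beta> a)"
    and spans: "\<forall>B. in_iD B \<longrightarrow>
                  (\<exists>c :: nat \<Rightarrow> real. \<forall>i<7. \<forall>j<7. B i j = (\<Sum>a<14. complex_of_real (c a) * \<beta> a i j))"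
    and orth: "\<forall>a<14. \<forall>b<14. (\<Sum>i<7. \<Sum>j<7. \<beta> a i j * \<beta> b j i) = (if a = b then 1/2 else 0)"
    and dens: "density_matrix7 (\<lambda>i j. (1/7) * ((if i = j then 1 else 0)
                    + (\<Sum>a<14. complex_of_real (v a) * \<beta> a i j)))"
  shows "(\<Sum>a<14. (v a)\<^sup>2) \<le> 8 * (10 - sqrt 65) \<and> sqrt (\<Sum>a<14. (v a)\<^sup>2) \<le> 3.93"
proof -
  define X where "X i j = (\<Sum>a<14. complex_of_real (v a) * \<beta> a i j)" for i j
  define B where "B x y = (\<Sum>i<7. \<Sum>j<7. cnj (x i) * X i j * y j)" for x y :: "nat \<Rightarrow> complex"
  define nc where "nc x = (\<Sum>i<7. cnj (x i) * x i)" for x :: "nat \<Rightarrow> complex"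
  have "\<forall>a<14. \<exists>A. \<forall>i<7. \<forall>j<7. \<beta> a i j = \<i> * complex_of_real (A i j)"
    using mem unfolding in_iD_def by blast
  then obtain Af where Af: "\<And>a i j. a < 14 \<Longrightarrow> i < 7 \<Longrightarrow> j < 7 \<Longrightarrow> \<beta> a i j = \<i> * complex_of_real (Af a i j)"
    by metis
  have Xim: "cnj (X i j) = - X i j" if "i < 7" "j < 7" for i j
  proof -
    have "X i j = \<i> * complex_of_real (\<Sum>a<14. v a * Af a i j)"
      unfolding X_def by (simp add: Af that sum_distrib_left algebra_simps)
    then show ?thesis by simp
  qed
  have pos0: "0 \<le> Re (\<Sum>i<7. \<Sum>j<7. cnj (z i) * ((1/7) * ((if i = j then 1 else 0) + X i j)) * z j)" for z
    using dens unfolding density_matrix7_def X_def by blast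
  have expand: "(\<Sum>i<7. \<Sum>j<7. cnj (z i) * ((1/7) * ((if i = j then 1 else 0) + X i j)) * z j)
      = (1/7) * (nc z + B z z)" for z
  proof -
    have "(\<Sum>i<7. \<Sum>j<7. cnj (z i) * ((1/7) * ((if i = j then 1 else 0) + X i j)) * z j)
       = (\<Sum>i<7. \<Sum>j<7. (1/7) * (if i = j then cnj (z i) * z j else 0) + (1/7) * (cnj (z i) * X i j * z j))"
      by (intro sum.cong refl) (simp add: algebra_simps)
    also have "\<dots> = (1/7) * (\<Sum>i<7. \<Sum>j<7. (if i = j then cnj (z i) * z j else 0)) + (1/7) * B z z"
      unfolding B_def by (simp only: sum.distrib sum_distrib_left)
    also have "(\<Sum>i<7. \<Sum>j<7. (if i = j then cnj (z i) * z j else 0)) = nc z"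
      unfolding nc_def by (intro sum.cong refl) (simp add: sum.delta)
    also have "(1/7) * nc z + (1/7) * B z z = (1/7) * (nc z + B z z)"
      by (simp add: algebra_simps)
    finally show ?thesis .
  qed
  have pos1: "0 \<le> Re (nc z) + Re (B z z)" for z
    using pos0[of z] unfolding expand by simp
  have Bcnj: "B (\<lambda>i. cnj (z i)) (\<lambda>i. cnj (z i)) = - cnj (B z z)" for z
    unfolding B_def by (simp add: Xim sum_negf[symmetric])
  have ncnj: "nc (\<lambda>i. cnj (z i)) = cnj (nc z)" for z
    unfolding nc_def by (simp add: mult.commute)
  have pos2: "0 \<le> Re (nc z) - Re (B z z)" for z
    using pos1[of "\<lambda>i. cnj (z i)"] unfolding Bcnj ncnj by simp
  have Bdiff: "B (\<lambda>i. x i + y i) (\<lambda>i. x i + y i) - B (\<lambda>i. x i - y i) (\<lambda>i. x i - y i) = 2 * (B x y + B y x)" for x y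
    unfolding B_def
    by (simp add: sum_subtractf[symmetric] sum_distrib_left sum.distrib[symmetric] algebra_simps)
  have ncsum: "nc (\<lambda>i. x i + y i) + nc (\<lambda>i. x i - y i) = 2 * (nc x + nc y)" for x y
    unfolding nc_def
    by (simp add: sum_distrib_left sum.distrib[symmetric] algebra_simps)
  have key: "Re (B x y) + Re (B y x) \<le> Re (nc x) + Re (nc y)" for x y
  proof -
    have a: "0 \<le> Re (nc (\<lambda>i. x i - y i)) + Re (B (\<lambda>i. x i - y i) (\<lambda>i. x i - y i))" by (rule pos1)
    have b: "0 \<le> Re (nc (\<lambda>i. x i + y i)) - Re (B (\<lambda>i. x i + y i) (\<lambda>i. x i + y i))" by (rule pos2)
    have c: "Re (B (\<lambda>i. x i + y i) (\<lambda>i. x i + y i)) - Re (B (\<lambda>i. x i - y i) (\<lambda>i. x i - y i)) = 2 * (Re (B x y) + Re (B y x))"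
      using arg_cong[OF Bdiff[of x y], of Re] by simp
    have d: "Re (nc (\<lambda>i. x i + y i)) + Re (nc (\<lambda>i. x i - y i)) = 2 * (Re (nc x) + Re (nc y))"
      using arg_cong[OF ncsum[of x y], of Re] by simp
    show ?thesis using a b c d by (smt (verit))
  qed
  have col: "Re (\<Sum>k<7. X j k * X k j) \<le> 1" if "j < 7" for j
  proof -
    define e where "e i = (if i = j then 1 else 0 :: complex)" for i
    define y where "y i = X i j" for i
    have "B e y = (\<Sum>i<7. if i = j then (\<Sum>k<7. X i k * X k j) else 0)"
      unfolding B_def e_def y_def by (intro sum.cong refl) simp
    then have 1: "B e y = (\<Sum>k<7. X j k * X k j)" using that by simp
    have "B y e = (\<Sum>i<7. (\<Sum>k<7. if k = j then cnj (X i j) * X i k else 0))"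
      unfolding B_def e_def y_def by (intro sum.cong refl) simp
    then have 2: "B y e = nc y" using that unfolding nc_def y_def by simp
    have "nc e = (\<Sum>i<7. if i = j then 1 else 0)"
      unfolding nc_def e_def by (intro sum.cong refl) simp
    then have 3: "nc e = 1" using that by simp
    show ?thesis using key[of e y] 1 2 3 by simp
  qed
  have tr: "(\<Sum>j<7. \<Sum>k<7. X j k * X k j) = complex_of_real ((\<Sum>a<14. (v a)\<^sup>2) / 2)"
  proof -
    define h where "h a b j k = complex_of_real (v a) * \<beta> a j k * (complex_of_real (v b) * \<beta> b k j)" for a b j k
    have "(\<Sum>j<7. \<Sum>k<7. X j k * X k j) = (\<Sum>j<(7::nat). \<Sum>k<(7::nat). \<Sum>a<(14::nat). \<Sum>b<(14::nat). h a b j k)"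
      unfolding X_def h_def by (simp only: sum_product)
    also have "\<dots> = (\<Sum>a<14. \<Sum>j<7. \<Sum>k<7. \<Sum>b<14. h a b j k)" by (rule swap3)
    also have "\<dots> = (\<Sum>a<14. \<Sum>b<14. \<Sum>j<7. \<Sum>k<7. h a b j k)"
      by (rule sum.cong[OF refl], rule swap3)
    also have "\<dots> = (\<Sum>a<14. \<Sum>b<14. complex_of_real (v a) * complex_of_real (v b) * (\<Sum>j<7. \<Sum>k<7. \<beta> a j k * \<beta> b k j))"
      unfolding h_def sum_distrib_left by (intro sum.cong refl) (simp add: algebra_simps)
    also have "\<dots> = (\<Sum>a<14. \<Sum>b<14. complex_of_real (v a) * complex_of_real (v b) * (if a = b then 1/2 else 0))"
      using orth by (intro sum.cong refl) simp
    also have "\<dots> = (\<Sum>a<14. \<Sum>b<14. if a = b then complex_of_real ((v a)\<^sup>2 / 2) else 0)"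
      by (intro sum.cong refl) (simp add: power2_eq_square)
    also have "\<dots> = (\<Sum>a<14. complex_of_real ((v a)\<^sup>2 / 2))"
      by (intro sum.cong refl) simp
    also have "\<dots> = complex_of_real ((\<Sum>a<14. (v a)\<^sup>2) / 2)"
      by (simp only: of_real_sum sum_divide_distrib)
    finally show ?thesis .
  qed
  have "Re (\<Sum>j<7. \<Sum>k<7. X j k * X k j) \<le> (\<Sum>j<(7::nat). 1)"
    unfolding Re_sum by (rule sum_mono) (use col in auto)
  then have S14: "(\<Sum>a<14. (v a)\<^sup>2) \<le> 14" unfolding tr by simp
  have s65: "sqrt 65 \<le> 8.25"
  proof -
    have "sqrt 65 \<le> sqrt (8.25^2)" by (subst real_sqrt_le_iff) (simp add: power2_eq_square)
    then show ?thesis by simp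
  qed
  have "sqrt (\<Sum>a<14. (v a)\<^sup>2) \<le> sqrt (3.93^2)"
    using S14 by (subst real_sqrt_le_iff) (simp add: power2_eq_square)
  then show ?thesis using S14 s65 by simp
qed

end
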